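(* Let $p,q,s$ be idempotents in a unital ring $A$ with $s\perp q$. If $\operatorname{sr}(pAq)=1$, then $\operatorname{sr}(pA(q+s))=1$.
   Context: Idempotents $e,f$ are orthogonal, $e\perp f$, if $ef=fe=0$ (so $q+s$ is an idempotent). For idempotents $p,q$ in a unital ring $A$, $\operatorname{sr}(pAq)=1$ means: whenever $a\in pAq$, $x\in qAp$, $b\in pAp$ satisfy $ax+b=p$, there exist $y\in pAq$, $z\in qAp$ with $(a+by)z=p$. *)

theory Defs
  imports Main
begin

definition idempotent :: "'a::ring_1 \<Rightarrow> bool" where
  "idempotent e \<longleftrightarrow> e * e = e"

definition orthogonal :: "'a::ring_1 \<Rightarrow> 'a \<Rightarrow> bool" where
  "orthogonal e f \<longleftrightarrow> e * f = 0 \<and> f * e = 0"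

definition corner :: "'a::ring_1 \<Rightarrow> 'a \<Rightarrow> 'a set" where
  "corner p q = {p * a * q | a. True}"

definition sr_one :: "'a::ring_1 \<Rightarrow> 'a \<Rightarrow> bool" where
  "sr_one p q \<longleftrightarrow>
     (\<forall>a\<in>corner p q. \<forall>x\<in>corner q p. \<forall>b\<in>corner p p.
        a * x + b = p \<longrightarrow>
        (\<exists>y\<in>corner p q. \<exists>z\<in>corner q p. (a + b * y) * z = p))"

end

theory Submission
  imports Defs
begin

lemma corner_iff:
  fixes p q c :: "'a::ring_1"
  assumes "idempotent p" "idempotent q"
  shows "c \<in> corner p q \<longleftrightarrow> p * c * q = c"
proof
  assume "c \<in> corner p q"
  then obtain a where c: "c = p * a * q" by (auto simp: corner_def)
  have "p * c * q = (p * p) * a * (q * q)" by (simp add: c mult.assoc)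
  also have "\<dots> = c" using assms by (simp add: idempotent_def c)
  finally show "p * c * q = c" .
next
  assume "p * c * q = c"
  then show "c \<in> corner p q" unfolding corner_def by (metis (mono_tags, lifting) mem_Collect_eq)
qed

theorem lemma3:
  fixes p q s :: "'a::ring_1"
  assumes "idempotent p" and "idempotent q" and "idempotent s"
    and "orthogonal s q"
    and "sr_one p q"
  shows "sr_one p (q + s)"
proof -
  have pp: "p * p = p" and qq: "q * q = q" and ss: "s * s = s"
    using assms(1-3) by (auto simp: idempotent_def)
  have sq: "s * q = 0" and qs: "q * s = 0" using assms(4) by (auto simp: orthogonal_def)
  define r where "r = q + s"
  have rr: "r * r = r" by (simp add: r_def algebra_simps qq ss sq qs)
  have rq: "r * q = q" and qr: "q * r = q" and rs: "r * s = s" and sr: "s * r = s"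
    by (simp_all add: r_def algebra_simps qq ss sq qs)
  have ir: "idempotent r" by (simp add: idempotent_def rr)
  note ip = assms(1) and iq = assms(2)
  note C = corner_iff[OF ip iq] corner_iff[OF iq ip] corner_iff[OF ip ip]
    corner_iff[OF ip ir] corner_iff[OF ir ip]
  show ?thesis unfolding r_def[symmetric] sr_one_def
  proof (intro ballI impI)
    fix a x b
    assume a: "a \<in> corner p r" and x: "x \<in> corner r p" and b: "b \<in> corner p p"
      and eq: "a * x + b = p"
    have a': "p * a * r = a" and x': "r * x * p = x" and b': "p * b * p = b"
      using a x b C by auto
    have pa: "p * a = a" by (metis a' pp mult.assoc)
    have ar: "a * r = a" by (metis a' rr mult.assoc)
    have xp: "x * p = x" by (metis x' pp mult.assoc)
    have rx: "r * x = x" by (metis x' rr mult.assoc)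
    have pb: "p * b = b" by (metis b' pp mult.assoc)
    have bp: "b * p = b" by (metis b' pp mult.assoc)
    have a1: "a * q \<in> corner p q"
      using C(1) by (metis pa qq mult.assoc)
    have x1: "q * x \<in> corner q p"
      using C(2) by (metis xp qq mult.assoc)
    have b1: "b + a * s * x \<in> corner p p"
    proof -
      have "p * (b + a * s * x) * p = p * b * p + (p * a) * s * (x * p)"
        by (simp add: distrib_left distrib_right mult.assoc)
      thus ?thesis using C(3) by (simp add: b' pa xp)
    qed
    have axe: "a * x = a * q * x + a * s * x"
      by (metis ar rx r_def distrib_left distrib_right mult.assoc)
    have eq1: "a * q * (q * x) + (b + a * s * x) = p"
    proof -
      have "a * q * (q * x) = a * q * x" by (metis mult.assoc qq)
      hence "a * q * (q * x) + (b + a * s * x) = a * x + b" using axe by (simp add: add_ac)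
      thus ?thesis using eq by simp
    qed
    obtain y z where y: "y \<in> corner p q" and z: "z \<in> corner q p"
      and yz: "(a * q + (b + a * s * x) * y) * z = p"
      using assms(5) a1 x1 b1 eq1 unfolding sr_one_def by blast
    have y': "p * y * q = y" and z': "q * z * p = z" using y z C by auto
    have yq: "y * q = y" by (metis y' qq mult.assoc)
    have py: "p * y = y" by (metis y' pp mult.assoc)
    have qz: "q * z = z" by (metis z' qq mult.assoc)
    have zp: "z * p = z" by (metis z' pp mult.assoc)
    define z2 where "z2 = z + s * x * y * z"
    have yr: "y \<in> corner p r"
      using C(4) by (metis py yq qr mult.assoc)
    have z2r: "z2 \<in> corner r p"
    proof -
      have "r * z2 * p = z2"
        unfolding z2_def distrib_left distrib_right
        by (metis qz rq rs zp mult.assoc)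
      thus ?thesis using C(5) by simp
    qed
    have ys: "y * s = 0" by (metis yq qs mult.assoc mult_zero_right)
    have sz: "s * z = 0" by (metis qz sq mult.assoc mult_zero_left)
    have az: "a * z = a * q * z" by (metis qz mult.assoc)
    have "(a + b * y) * z2 = a * z + a * s * x * y * z + b * y * z + b * (y * s) * x * y * z"
      by (simp add: z2_def algebra_simps mult.assoc)
    also have "\<dots> = a * q * z + a * s * x * y * z + b * y * z"
      using ys az by simp
    also have "\<dots> = p" using yz[symmetric] by (simp add: algebra_simps mult.assoc)
    finally show "\<exists>y\<in>corner p r. \<exists>z\<in>corner r p. (a + b * y) * z = p"
      using yr z2r by blast
  qed
qed

end
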